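(* Let $(X,\rho_X)$ be a symmetric rack, $(A,\phi,\psi,\eta)$ a constant-coefficient $(X,\rho_X)$-module, and $\alpha\in Z^2_{SR}((X,\rho_X);A)$. Then $\operatorname{Ker}(\Gamma)$ is isomorphic as a group to $$Z^1_{SR}((X,\rho_X);A)=\{\lambda:X\to A\mid \phi\lambda(x)-\lambda(x*y)+\psi\lambda(y)=0\text{ and }\eta\lambda(z)=\lambda(\rho_X(z))\text{ for all }x,y,z\in X\},$$ a group under pointwise addition.
   Context: A rack is a set $X$ with binary operation $*$ such that each $x\mapsto x*y$ is bijective (inverse $x\mapsto x*^{-1}y$) and $(x*y)*z=(x*z)*(y*z)$. A symmetric rack $(X,\rho_X)$ is a rack with $\rho_X:X\to X$ such that $\rho_X^2=\mathrm{id}$, $\rho_X(x*y)=\rho_X(x)*y$, $x*\rho_X(y)=x*^{-1}y$. $\operatorname{Aut}(X,\rho_X)$: bijections preserving $*$ and commuting with $\rho_X$. A constant-coefficient $(X,\rho_X)$-module $\mathcal F=(A,\phi,\psi,\eta)$: an abelian group $A$ with group automorphism $\phi$ and endomorphisms $\psi,\eta$ satisfying $\phi\psi=\psi\phi$, $\eta^2=\mathrm{id}$, $\eta\phi=\phi\eta$, $\eta\psi=\psi$, $\phi^2=\mathrm{id}$, $\psi=\phi\psi+\psi^2$, $\phi\psi\eta=-\psi$. $\operatorname{Aut}(A)$: group automorphisms of $A$ commuting with $\phi,\psi,\eta$. $Z^2_{SR}((X,\rho_X);A)$: maps $\alpha:X\times X\to A$ with, for all $x,y,z$: $-\phi\alpha(x,z)+\phi\alpha(x,y)+\alpha(x*y,z)-\alpha(x*z,y*z)-\psi\alpha(y,z)=0$,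 $\eta\alpha(x,y)=\alpha(\rho_X(x),y)$, $\phi\alpha(x*y,\rho_X(y))+\alpha(x,y)=0$. $E(\mathcal F,\alpha)$ is the symmetric rack on $X\times A$ with $(x,a)*(y,b)=(x*y,\phi(a)+\psi(b)+\alpha(x,y))$ and $\rho_{E(\mathcal F,\alpha)}(x,a)=(\rho_X(x),\eta(a))$. $\operatorname{Aut}_A(E(\mathcal F,\alpha),\rho_{E(\mathcal F,\alpha)})$ is the group of symmetric rack automorphisms $\xi$ of it of the form $\xi(x,s)=(\zeta(x),\lambda(x)+\theta(s))$ with $(\zeta,\theta)\in\operatorname{Aut}(X,\rho_X)\times\operatorname{Aut}(A)$ and $\lambda:X\to A$ a map; $\Gamma:\operatorname{Aut}_A(E(\mathcal F,\alpha),\rho_{E(\mathcal F,\alpha)})\to\operatorname{Aut}(X,\rho_X)\times\operatorname{Aut}(A)$ is the group homomorphism $\Gamma(\xi)=(\zeta,\theta)$. *)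

theory Defs
  imports "HOL-Algebra.Coset"
begin

(* The underlying set X of the rack is the (nonempty) type 'x; the abelian group A is
   the type 'a :: ab_group_add. *)

definition rack :: "('x \<Rightarrow> 'x \<Rightarrow> 'x) \<Rightarrow> bool" where
  "rack op \<longleftrightarrow> (\<forall>y. bij (\<lambda>x. op x y)) \<and>
     (\<forall>x y z. op (op x y) z = op (op x z) (op y z))"

definition rack_inv :: "('x \<Rightarrow> 'x \<Rightarrow> 'x) \<Rightarrow> 'x \<Rightarrow> 'x \<Rightarrow> 'x" where
  "rack_inv op x y = Hilbert_Choice.inv (\<lambda>u. op u y) x"

definition symmetric_rack :: "('x \<Rightarrow> 'x \<Rightarrow> 'x) \<Rightarrow> ('x \<Rightarrow> 'x) \<Rightarrow> bool" where
  "symmetric_rack op \<rho> \<longleftrightarrow> rack op \<and> (\<forall>x. \<rho> (\<rho> x) = x) \<and>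
     (\<forall>x y. \<rho> (op x y) = op (\<rho> x) y) \<and> (\<forall>x y. op x (\<rho> y) = rack_inv op x y)"

definition sr_aut :: "('x \<Rightarrow> 'x \<Rightarrow> 'x) \<Rightarrow> ('x \<Rightarrow> 'x) \<Rightarrow> ('x \<Rightarrow> 'x) \<Rightarrow> bool" where
  "sr_aut op \<rho> f \<longleftrightarrow> bij f \<and> (\<forall>x y. f (op x y) = op (f x) (f y)) \<and> (\<forall>x. f (\<rho> x) = \<rho> (f x))"

definition Aut_SR :: "('x \<Rightarrow> 'x \<Rightarrow> 'x) \<Rightarrow> ('x \<Rightarrow> 'x) \<Rightarrow> ('x \<Rightarrow> 'x) monoid" where
  "Aut_SR op \<rho> = \<lparr>carrier = {f. sr_aut op \<rho> f}, mult = (\<circ>), one = id\<rparr>"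

definition additive_map :: "('a::ab_group_add \<Rightarrow> 'a) \<Rightarrow> bool" where
  "additive_map f \<longleftrightarrow> (\<forall>a b. f (a + b) = f a + f b)"

definition cc_module :: "('a::ab_group_add \<Rightarrow> 'a) \<Rightarrow> ('a \<Rightarrow> 'a) \<Rightarrow> ('a \<Rightarrow> 'a) \<Rightarrow> bool" where
  "cc_module \<phi> \<psi> \<eta> \<longleftrightarrow> bij \<phi> \<and> additive_map \<phi> \<and> additive_map \<psi> \<and> additive_map \<eta> \<and>
     (\<forall>a. \<phi> (\<psi> a) = \<psi> (\<phi> a)) \<and> (\<forall>a. \<eta> (\<eta> a) = a) \<and> (\<forall>a. \<eta> (\<phi> a) = \<phi> (\<eta> a)) \<and>
     (\<forall>a. \<eta> (\<psi> a) = \<psi> a) \<and> (\<forall>a. \<phi> (\<phi> a) = a) \<and>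
     (\<forall>a. \<psi> a = \<phi> (\<psi> a) + \<psi> (\<psi> a)) \<and> (\<forall>a. \<phi> (\<psi> (\<eta> a)) = - \<psi> a)"

definition Aut_Mod :: "('a::ab_group_add \<Rightarrow> 'a) \<Rightarrow> ('a \<Rightarrow> 'a) \<Rightarrow> ('a \<Rightarrow> 'a) \<Rightarrow> ('a \<Rightarrow> 'a) monoid" where
  "Aut_Mod \<phi> \<psi> \<eta> = \<lparr>carrier = {t. bij t \<and> additive_map t \<and>
       (\<forall>a. t (\<phi> a) = \<phi> (t a)) \<and> (\<forall>a. t (\<psi> a) = \<psi> (t a)) \<and> (\<forall>a. t (\<eta> a) = \<eta> (t a))},
     mult = (\<circ>), one = id\<rparr>"

definition Z2_SR :: "('x \<Rightarrow> 'x \<Rightarrow> 'x) \<Rightarrow> ('x \<Rightarrow> 'x) \<Rightarrow> ('a::ab_group_add \<Rightarrow> 'a) \<Rightarrow> ('a \<Rightarrow> 'a) \<Rightarrow> ('a \<Rightarrow> 'a)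
     \<Rightarrow> ('x \<Rightarrow> 'x \<Rightarrow> 'a) set" where
  "Z2_SR op \<rho> \<phi> \<psi> \<eta> = {\<alpha>.
     (\<forall>x y z. - \<phi> (\<alpha> x z) + \<phi> (\<alpha> x y) + \<alpha> (op x y) z - \<alpha> (op x z) (op y z) - \<psi> (\<alpha> y z) = 0) \<and>
     (\<forall>x y. \<eta> (\<alpha> x y) = \<alpha> (\<rho> x) y) \<and>
     (\<forall>x y. \<phi> (\<alpha> (op x y) (\<rho> y)) + \<alpha> x y = 0)}"

definition Z1_SR :: "('x \<Rightarrow> 'x \<Rightarrow> 'x) \<Rightarrow> ('x \<Rightarrow> 'x) \<Rightarrow> ('a::ab_group_add \<Rightarrow> 'a) \<Rightarrow> ('a \<Rightarrow> 'a) \<Rightarrow> ('a \<Rightarrow> 'a)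
     \<Rightarrow> ('x \<Rightarrow> 'a) set" where
  "Z1_SR op \<rho> \<phi> \<psi> \<eta> = {l.
     (\<forall>x y. \<phi> (l x) - l (op x y) + \<psi> (l y) = 0) \<and> (\<forall>z. \<eta> (l z) = l (\<rho> z))}"

definition Z1_group :: "('x \<Rightarrow> 'x \<Rightarrow> 'x) \<Rightarrow> ('x \<Rightarrow> 'x) \<Rightarrow> ('a::ab_group_add \<Rightarrow> 'a) \<Rightarrow> ('a \<Rightarrow> 'a) \<Rightarrow> ('a \<Rightarrow> 'a)
     \<Rightarrow> ('x \<Rightarrow> 'a) monoid" where
  "Z1_group op \<rho> \<phi> \<psi> \<eta> = \<lparr>carrier = Z1_SR op \<rho> \<phi> \<psi> \<eta>, mult = (\<lambda>f g x. f x + g x), one = (\<lambda>x. 0)\<rparr>"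

(* the extension E(F, alpha): operation and involution on X x A *)
definition E_op :: "('x \<Rightarrow> 'x \<Rightarrow> 'x) \<Rightarrow> ('a::ab_group_add \<Rightarrow> 'a) \<Rightarrow> ('a \<Rightarrow> 'a) \<Rightarrow> ('x \<Rightarrow> 'x \<Rightarrow> 'a)
     \<Rightarrow> 'x \<times> 'a \<Rightarrow> 'x \<times> 'a \<Rightarrow> 'x \<times> 'a" where
  "E_op op \<phi> \<psi> \<alpha> p q = (op (fst p) (fst q), \<phi> (snd p) + \<psi> (snd q) + \<alpha> (fst p) (fst q))"

definition E_rho :: "('x \<Rightarrow> 'x) \<Rightarrow> ('a \<Rightarrow> 'a) \<Rightarrow> 'x \<times> 'a \<Rightarrow> 'x \<times> 'a" where
  "E_rho \<rho> \<eta> p = (\<rho> (fst p), \<eta> (snd p))"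

definition A_form :: "('x \<Rightarrow> 'x \<Rightarrow> 'x) \<Rightarrow> ('x \<Rightarrow> 'x) \<Rightarrow> ('a::ab_group_add \<Rightarrow> 'a) \<Rightarrow> ('a \<Rightarrow> 'a) \<Rightarrow> ('a \<Rightarrow> 'a)
     \<Rightarrow> ('x \<times> 'a \<Rightarrow> 'x \<times> 'a) \<Rightarrow> ('x \<Rightarrow> 'x) \<Rightarrow> ('a \<Rightarrow> 'a) \<Rightarrow> bool" where
  "A_form op \<rho> \<phi> \<psi> \<eta> \<xi> \<zeta> \<theta> \<longleftrightarrow> \<zeta> \<in> carrier (Aut_SR op \<rho>) \<and> \<theta> \<in> carrier (Aut_Mod \<phi> \<psi> \<eta>) \<and>
     (\<exists>l. \<forall>x s. \<xi> (x, s) = (\<zeta> x, l x + \<theta> s))"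

definition Aut_A :: "('x \<Rightarrow> 'x \<Rightarrow> 'x) \<Rightarrow> ('x \<Rightarrow> 'x) \<Rightarrow> ('a::ab_group_add \<Rightarrow> 'a) \<Rightarrow> ('a \<Rightarrow> 'a) \<Rightarrow> ('a \<Rightarrow> 'a)
     \<Rightarrow> ('x \<Rightarrow> 'x \<Rightarrow> 'a) \<Rightarrow> ('x \<times> 'a \<Rightarrow> 'x \<times> 'a) monoid" where
  "Aut_A op \<rho> \<phi> \<psi> \<eta> \<alpha> = \<lparr>carrier = {\<xi>. sr_aut (E_op op \<phi> \<psi> \<alpha>) (E_rho \<rho> \<eta>) \<xi> \<and>
       (\<exists>\<zeta> \<theta>. A_form op \<rho> \<phi> \<psi> \<eta> \<xi> \<zeta> \<theta>)},
     mult = (\<circ>), one = id\<rparr>"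

definition Gamma :: "('x \<Rightarrow> 'x \<Rightarrow> 'x) \<Rightarrow> ('x \<Rightarrow> 'x) \<Rightarrow> ('a::ab_group_add \<Rightarrow> 'a) \<Rightarrow> ('a \<Rightarrow> 'a) \<Rightarrow> ('a \<Rightarrow> 'a)
     \<Rightarrow> ('x \<times> 'a \<Rightarrow> 'x \<times> 'a) \<Rightarrow> ('x \<Rightarrow> 'x) \<times> ('a \<Rightarrow> 'a)" where
  "Gamma op \<rho> \<phi> \<psi> \<eta> \<xi> = (THE p. A_form op \<rho> \<phi> \<psi> \<eta> \<xi> (fst p) (snd p))"

end

theory Submission
  imports Defs
begin

lemma additive_zero: "additive_map (t::'a::ab_group_add \<Rightarrow> 'a) \<Longrightarrow> t 0 = 0"
  unfolding additive_map_def by (metis add_cancel_right_right add_0)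

lemma A_form_unique:
  assumes "A_form op \<rho> \<phi> \<psi> \<eta> \<xi> z1 t1" "A_form op \<rho> \<phi> \<psi> \<eta> \<xi> z2 t2"
  shows "z1 = z2 \<and> t1 = t2"
proof -
  obtain l1 where l1: "\<And>x s. \<xi> (x, s) = (z1 x, l1 x + t1 s)" and a1: "additive_map t1"
    using assms(1) unfolding A_form_def Aut_Mod_def by auto
  obtain l2 where l2: "\<And>x s. \<xi> (x, s) = (z2 x, l2 x + t2 s)" and a2: "additive_map t2"
    using assms(2) unfolding A_form_def Aut_Mod_def by auto
  have "z1 x = z2 x" for x using l1[of x 0] l2[of x 0] by simp
  then have z: "z1 = z2" by (rule ext)
  have l: "l1 x = l2 x" for x using l1[of x 0] l2[of x 0] additive_zero[OF a1] additive_zero[OF a2] by simp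
  have "t1 s = t2 s" for s using l1[of undefined s] l2[of undefined s] l[of undefined] by simp
  with z show ?thesis by auto
qed

lemma Gamma_eq:
  assumes "A_form op \<rho> \<phi> \<psi> \<eta> \<xi> z t"
  shows "Gamma op \<rho> \<phi> \<psi> \<eta> \<xi> = (z, t)"
  unfolding Gamma_def
proof (rule the_equality)
  show "A_form op \<rho> \<phi> \<psi> \<eta> \<xi> (fst (z, t)) (snd (z, t))" using assms by simp
next
  fix p assume "A_form op \<rho> \<phi> \<psi> \<eta> \<xi> (fst p) (snd p)"
  from A_form_unique[OF assms this] show "p = (z, t)" by (simp add: prod_eq_iff)
qed

lemma id_in: "id \<in> carrier (Aut_SR op \<rho>)" "id \<in> carrier (Aut_Mod \<phi> \<psi> \<eta>)"
  unfolding Aut_SR_def Aut_Mod_def sr_aut_def additive_map_def by auto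

lemma kernel_char:
  assumes cc: "cc_module \<phi> \<psi> \<eta>"
  shows "\<xi> \<in> kernel (Aut_A op \<rho> \<phi> \<psi> \<eta> \<alpha>) (Aut_SR op \<rho> \<times>\<times> Aut_Mod \<phi> \<psi> \<eta>) (Gamma op \<rho> \<phi> \<psi> \<eta>)
    \<longleftrightarrow> (\<exists>l \<in> Z1_SR op \<rho> \<phi> \<psi> \<eta>. \<xi> = (\<lambda>p. (fst p, l (fst p) + snd p)))"
proof -
  have ph: "additive_map \<phi>" and ps: "additive_map \<psi>" and et: "additive_map \<eta>"
    using cc unfolding cc_module_def by auto
  have key: "sr_aut (E_op op \<phi> \<psi> \<alpha>) (E_rho \<rho> \<eta>) (\<lambda>p. (fst p, l (fst p) + snd p))
         \<longleftrightarrow> l \<in> Z1_SR op \<rho> \<phi> \<psi> \<eta>" for l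
  proof
    assume s: "sr_aut (E_op op \<phi> \<psi> \<alpha>) (E_rho \<rho> \<eta>) (\<lambda>p. (fst p, l (fst p) + snd p))"
    have 1: "\<phi> (l x) - l (op x y) + \<psi> (l y) = 0" for x y
    proof -
      have "l (op x y) + (\<phi> 0 + \<psi> 0 + \<alpha> x y) = \<phi> (l x + 0) + \<psi> (l y + 0) + \<alpha> x y"
      proof -
        have "\<forall>p q. (\<lambda>p. (fst p, l (fst p) + snd p)) (E_op op \<phi> \<psi> \<alpha> p q) = E_op op \<phi> \<psi> \<alpha> ((\<lambda>p. (fst p, l (fst p) + snd p)) p) ((\<lambda>p. (fst p, l (fst p) + snd p)) q)"
          using s unfolding sr_aut_def by blast
        then have "(\<lambda>p. (fst p, l (fst p) + snd p)) (E_op op \<phi> \<psi> \<alpha> (x,0) (y,0)) = E_op op \<phi> \<psi> \<alpha> ((\<lambda>p. (fst p, l (fst p) + snd p)) (x,0)) ((\<lambda>p. (fst p, l (fst p) + snd p)) (y,0))"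
          by blast
        then show ?thesis unfolding E_op_def by simp
      qed
      then show ?thesis using additive_zero[OF ph] additive_zero[OF ps]
        by (simp add: algebra_simps)
    qed
    have 2: "\<eta> (l z) = l (\<rho> z)" for z
    proof -
      have "(\<rho> z, l (\<rho> z) + \<eta> 0) = (\<rho> z, \<eta> (l z + 0))"
      proof -
        have "\<forall>p. (\<lambda>p. (fst p, l (fst p) + snd p)) (E_rho \<rho> \<eta> p) = E_rho \<rho> \<eta> ((\<lambda>p. (fst p, l (fst p) + snd p)) p)"
          using s unfolding sr_aut_def by blast
        then have "(\<lambda>p. (fst p, l (fst p) + snd p)) (E_rho \<rho> \<eta> (z,0)) = E_rho \<rho> \<eta> ((\<lambda>p. (fst p, l (fst p) + snd p)) (z,0))"
          by blast
        then show ?thesis unfolding E_rho_def by simp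
      qed
      then show ?thesis using additive_zero[OF et] by simp
    qed
    show "l \<in> Z1_SR op \<rho> \<phi> \<psi> \<eta>" unfolding Z1_SR_def using 1 2 by auto
  next
    assume l: "l \<in> Z1_SR op \<rho> \<phi> \<psi> \<eta>"
    have 1: "l (op x y) = \<phi> (l x) + \<psi> (l y)" for x y
    proof -
      have h: "\<phi> (l x) - l (op x y) + \<psi> (l y) = 0" using l unfolding Z1_SR_def by blast
      have "l (op x y) = \<phi> (l x) + \<psi> (l y) - (\<phi> (l x) - l (op x y) + \<psi> (l y))" by simp
      with h show ?thesis by simp
    qed
    have 2: "\<eta> (l z) = l (\<rho> z)" for z using l unfolding Z1_SR_def by auto
    have "bij (\<lambda>p. (fst p, l (fst p) + snd p))"
    proof (rule bij_betw_byWitness[where f'="\<lambda>p. (fst p, snd p - l (fst p))"]) qed auto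
    moreover have "\<forall>p q. (\<lambda>p. (fst p, l (fst p) + snd p)) (E_op op \<phi> \<psi> \<alpha> p q) =
        E_op op \<phi> \<psi> \<alpha> ((\<lambda>p. (fst p, l (fst p) + snd p)) p) ((\<lambda>p. (fst p, l (fst p) + snd p)) q)"
      using ph ps 1 unfolding E_op_def additive_map_def by (simp add: algebra_simps)
    moreover have "\<forall>p. (\<lambda>p. (fst p, l (fst p) + snd p)) (E_rho \<rho> \<eta> p) =
        E_rho \<rho> \<eta> ((\<lambda>p. (fst p, l (fst p) + snd p)) p)"
      using et 2 unfolding E_rho_def additive_map_def by simp
    ultimately show "sr_aut (E_op op \<phi> \<psi> \<alpha>) (E_rho \<rho> \<eta>) (\<lambda>p. (fst p, l (fst p) + snd p))"
      unfolding sr_aut_def by blast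
  qed
  show ?thesis
  proof
    assume k: "\<xi> \<in> kernel (Aut_A op \<rho> \<phi> \<psi> \<eta> \<alpha>) (Aut_SR op \<rho> \<times>\<times> Aut_Mod \<phi> \<psi> \<eta>) (Gamma op \<rho> \<phi> \<psi> \<eta>)"
    then have c: "\<xi> \<in> carrier (Aut_A op \<rho> \<phi> \<psi> \<eta> \<alpha>)" and g: "Gamma op \<rho> \<phi> \<psi> \<eta> \<xi> = (id, id)"
      by (simp_all add: kernel_def DirProd_def Aut_SR_def Aut_Mod_def)
    from c obtain z t where af: "A_form op \<rho> \<phi> \<psi> \<eta> \<xi> z t"
      and sa: "sr_aut (E_op op \<phi> \<psi> \<alpha>) (E_rho \<rho> \<eta>) \<xi>"
      unfolding Aut_A_def by auto
    from Gamma_eq[OF af] g have "z = id" "t = id" by auto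
    with af obtain l where "\<And>x s. \<xi> (x, s) = (x, l x + s)" unfolding A_form_def by auto
    then have e: "\<xi> = (\<lambda>p. (fst p, l (fst p) + snd p))" by auto
    have "l \<in> Z1_SR op \<rho> \<phi> \<psi> \<eta>" using sa key[of l] e by simp
    with e show "\<exists>l \<in> Z1_SR op \<rho> \<phi> \<psi> \<eta>. \<xi> = (\<lambda>p. (fst p, l (fst p) + snd p))" by blast
  next
    assume "\<exists>l \<in> Z1_SR op \<rho> \<phi> \<psi> \<eta>. \<xi> = (\<lambda>p. (fst p, l (fst p) + snd p))"
    then obtain l where l: "l \<in> Z1_SR op \<rho> \<phi> \<psi> \<eta>" and e: "\<xi> = (\<lambda>p. (fst p, l (fst p) + snd p))" by auto
    have af: "A_form op \<rho> \<phi> \<psi> \<eta> \<xi> id id" unfolding A_form_def using id_in e by auto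
    have "sr_aut (E_op op \<phi> \<psi> \<alpha>) (E_rho \<rho> \<eta>) \<xi>" using key[of l] l e by simp
    with af have "\<xi> \<in> carrier (Aut_A op \<rho> \<phi> \<psi> \<eta> \<alpha>)" unfolding Aut_A_def by auto
    moreover have "Gamma op \<rho> \<phi> \<psi> \<eta> \<xi> = (id, id)" by (rule Gamma_eq[OF af])
    ultimately show "\<xi> \<in> kernel (Aut_A op \<rho> \<phi> \<psi> \<eta> \<alpha>) (Aut_SR op \<rho> \<times>\<times> Aut_Mod \<phi> \<psi> \<eta>) (Gamma op \<rho> \<phi> \<psi> \<eta>)"
      by (simp add: kernel_def DirProd_def Aut_SR_def Aut_Mod_def)
  qed
qed

theorem proposition6p6:
  fixes op :: "'x \<Rightarrow> 'x \<Rightarrow> 'x" and \<rho> :: "'x \<Rightarrow> 'x"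
    and \<phi> \<psi> \<eta> :: "'a::ab_group_add \<Rightarrow> 'a" and \<alpha> :: "'x \<Rightarrow> 'x \<Rightarrow> 'a"
  assumes "symmetric_rack op \<rho>"
    and "cc_module \<phi> \<psi> \<eta>"
    and "\<alpha> \<in> Z2_SR op \<rho> \<phi> \<psi> \<eta>"
  shows "(Aut_A op \<rho> \<phi> \<psi> \<eta> \<alpha>)\<lparr>carrier := kernel (Aut_A op \<rho> \<phi> \<psi> \<eta> \<alpha>)
            (Aut_SR op \<rho> \<times>\<times> Aut_Mod \<phi> \<psi> \<eta>) (Gamma op \<rho> \<phi> \<psi> \<eta>)\<rparr>
         \<cong> Z1_group op \<rho> \<phi> \<psi> \<eta>"
proof -
  define K where "K = kernel (Aut_A op \<rho> \<phi> \<psi> \<eta> \<alpha>) (Aut_SR op \<rho> \<times>\<times> Aut_Mod \<phi> \<psi> \<eta>) (Gamma op \<rho> \<phi> \<psi> \<eta>)"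
  define F where "F = (\<lambda>(l::'x \<Rightarrow> 'a) (p::'x \<times> 'a). (fst p, l (fst p) + snd p))"
  define h where "h = (\<lambda>(\<xi>::'x \<times> 'a \<Rightarrow> 'x \<times> 'a) x. snd (\<xi> (x, 0)))"
  have kc: "\<xi> \<in> K \<longleftrightarrow> (\<exists>l \<in> Z1_SR op \<rho> \<phi> \<psi> \<eta>. \<xi> = F l)" for \<xi>
    unfolding K_def F_def by (rule kernel_char[OF assms(2)])
  have hF: "h (F l) = l" for l unfolding h_def F_def by simp
  have FF: "F l1 \<circ> F l2 = F (\<lambda>x. l1 x + l2 x)" for l1 l2
    unfolding F_def by (auto simp: algebra_simps)
  have cG: "carrier ((Aut_A op \<rho> \<phi> \<psi> \<eta> \<alpha>)\<lparr>carrier := K\<rparr>) = K" by simp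
  have mG: "a \<otimes>\<^bsub>(Aut_A op \<rho> \<phi> \<psi> \<eta> \<alpha>)\<lparr>carrier := K\<rparr>\<^esub> b = a \<circ> b" for a b
    by (simp add: Aut_A_def)
  have cZ: "carrier (Z1_group op \<rho> \<phi> \<psi> \<eta>) = Z1_SR op \<rho> \<phi> \<psi> \<eta>" by (simp add: Z1_group_def)
  have mZ: "f \<otimes>\<^bsub>Z1_group op \<rho> \<phi> \<psi> \<eta>\<^esub> g = (\<lambda>x. f x + g x)" for f g by (simp add: Z1_group_def)
  have hm: "h \<in> hom ((Aut_A op \<rho> \<phi> \<psi> \<eta> \<alpha>)\<lparr>carrier := K\<rparr>) (Z1_group op \<rho> \<phi> \<psi> \<eta>)"
    unfolding hom_def cG cZ mG mZ
  proof (intro CollectI conjI ballI Pi_I)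
    fix a assume "a \<in> K"
    then obtain la where "la \<in> Z1_SR op \<rho> \<phi> \<psi> \<eta>" "a = F la" using kc by blast
    then show "h a \<in> Z1_SR op \<rho> \<phi> \<psi> \<eta>" using hF by simp
  next
    fix a b assume "a \<in> K" "b \<in> K"
    then obtain la lb where "a = F la" "b = F lb" using kc by blast
    then show "h (a \<circ> b) = (\<lambda>x. h a x + h b x)" using hF FF by simp
  qed
  have "bij_betw h K (Z1_SR op \<rho> \<phi> \<psi> \<eta>)"
  proof (rule bij_betw_byWitness[where f'=F])
    show "\<forall>a\<in>K. F (h a) = a"
    proof
      fix a assume "a \<in> K" then obtain l where "a = F l" using kc by blast
      then show "F (h a) = a" by (simp add: hF)
    qed
    show "\<forall>a'\<in>Z1_SR op \<rho> \<phi> \<psi> \<eta>. h (F a') = a'" by (simp add: hF)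
    show "h ` K \<subseteq> Z1_SR op \<rho> \<phi> \<psi> \<eta>"
    proof
      fix b assume "b \<in> h ` K" then obtain a where "a \<in> K" "b = h a" by blast
      then obtain l where "l \<in> Z1_SR op \<rho> \<phi> \<psi> \<eta>" "a = F l" using kc by blast
      then show "b \<in> Z1_SR op \<rho> \<phi> \<psi> \<eta>" using \<open>b = h a\<close> by (simp add: hF)
    qed
    show "F ` Z1_SR op \<rho> \<phi> \<psi> \<eta> \<subseteq> K"
    proof
      fix b assume "b \<in> F ` Z1_SR op \<rho> \<phi> \<psi> \<eta>" then obtain l where "l \<in> Z1_SR op \<rho> \<phi> \<psi> \<eta>" "b = F l" by blast
      then show "b \<in> K" using kc by blast
    qed
  qed
  with hm have "h \<in> iso ((Aut_A op \<rho> \<phi> \<psi> \<eta> \<alpha>)\<lparr>carrier := K\<rparr>) (Z1_group op \<rho> \<phi> \<psi> \<eta>)"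
    unfolding iso_def cG cZ by blast
  then show ?thesis unfolding K_def by (rule is_isoI)
qed

end
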